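(* Let $\gamma\colon[0,1]\to(0,1)^d$ be a $1$-Lipschitz curve which is $\theta$-flat in direction $u\in\mathbb{S}^{d-1}$ around an interval $R_0\subseteq[0,1]$, where $\theta\in(0,1/3)$. Let $(a,b)\subseteq R_0$, $q\in R_0\setminus(a,b)$, $r\in\mathbb{R}$, $\tau>0$, and let $h\colon[0,1]^d\to\mathbb{R}$ be a Lipschitz function with $h(x)=r+\tau\|x-\gamma(q)\|$ for $x\in\{\gamma(a),\gamma(b)\}$. Then, writing $(h\circ\gamma)\big|_a^b=h(\gamma(b))-h(\gamma(a))$, $$\big|(h\circ\gamma)\big|_a^b-\tau(b-a)\big|\leq 3\theta\tau(b-a)\quad\text{if } q\leq a\leq b,$$ $$\big|(h\circ\gamma)\big|_a^b-\tau(a-b)\big|\leq 3\theta\tau(b-a)\quad\text{if } a\leq b\leq q.$$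
   Context: A Lipschitz curve is a Lipschitz map $\gamma\colon I\to\mathbb{R}^d$, $I$ a closed interval, whose derivative is bounded away from zero in norm a.e. $\gamma$ is $\theta$-flat in direction $u$ around an interval $R_0$ if for all $t_1,t_2\in[0,1]$ with $\operatorname{dist}(t_i,R_0)<\mathcal{L}(R_0)$ (length of $R_0$) we have $\|\gamma(t_1)-\gamma(t_2)-(t_1-t_2)u\|\leq\theta|t_1-t_2|$. *)

theory Defs
  imports "HOL-Analysis.Analysis"
begin

definition lipschitz_curve :: "real \<Rightarrow> (real \<Rightarrow> 'a::euclidean_space) \<Rightarrow> bool" where
  "lipschitz_curve L \<gamma> \<longleftrightarrow>
     L-lipschitz_on {0..1} \<gamma> \<and>
     (\<exists>c>0. AE t in lborel. t \<in> {0..1} \<longrightarrow>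
        \<gamma> differentiable (at t) \<and> c \<le> norm (vector_derivative \<gamma> (at t)))"

definition flat_around :: "real \<Rightarrow> 'a::euclidean_space \<Rightarrow> real \<Rightarrow> real \<Rightarrow> (real \<Rightarrow> 'a) \<Rightarrow> bool" where
  "flat_around \<theta> u r0 r1 \<gamma> \<longleftrightarrow>
     (\<forall>t1\<in>{0..1}. \<forall>t2\<in>{0..1}.
        infdist t1 {r0..r1} < r1 - r0 \<longrightarrow> infdist t2 {r0..r1} < r1 - r0 \<longrightarrow>
        norm (\<gamma> t1 - \<gamma> t2 - (t1 - t2) *\<^sub>R u) \<le> \<theta> * \<bar>t1 - t2\<bar>)"

end

theory Submission
  imports Defs
begin

lemma core:
  fixes u v w :: "'a::real_inner"
  assumes u: "norm u = 1" and th: "0 \<le> \<theta>" "\<theta> < 1/3" and s: "0 \<le> s" and t: "0 \<le> t"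
    and hv: "norm (v - s *\<^sub>R u) \<le> \<theta> * s" and hd: "norm (w - v - t *\<^sub>R u) \<le> \<theta> * t"
  shows "\<bar>norm w - norm v - t\<bar> \<le> 3 * \<theta> * t"
proof -
  define d where "d = w - v"
  have w: "w = v + d" by (simp add: d_def)
  have dn: "norm d \<le> t + \<theta> * t"
  proof -
    have "norm d \<le> norm (d - t *\<^sub>R u) + norm (t *\<^sub>R u)" using norm_triangle_sub[of d "t *\<^sub>R u"] by linarith
    also have "norm (t *\<^sub>R u) = t" using u t by simp
    finally show ?thesis using hd d_def by simp
  qed
  have up: "norm w \<le> norm v + norm d" using w norm_triangle_ineq by metis
  have low: "norm w \<ge> norm v + (1 - 3*\<theta>) * t"
  proof (cases "v = 0")
    case True
    have "norm d \<ge> t - \<theta> * t"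
    proof -
      have "norm (t *\<^sub>R u) \<le> norm d + norm (d - t *\<^sub>R u)" using norm_triangle_sub[of "t *\<^sub>R u" d] norm_minus_commute[of "t *\<^sub>R u" d] by linarith
      then show ?thesis using u t hd d_def by simp
    qed
    moreover have "0 \<le> \<theta> * t" using th t by simp
    ultimately show ?thesis using True w by (simp add: algebra_simps)
  next
    case False
    hence vp: "norm v > 0" by simp
    have vn: "norm v \<le> s + \<theta> * s"
    proof -
      have "norm v \<le> norm (v - s *\<^sub>R u) + norm (s *\<^sub>R u)" using norm_triangle_sub[of v "s *\<^sub>R u"] by linarith
      then show ?thesis using u s hv by simp
    qed
    have uv: "u \<bullet> v \<ge> s - \<theta> * s"
    proof -
      have "u \<bullet> v = s + u \<bullet> (v - s *\<^sub>R u)" using u by (simp add: inner_diff_right dot_square_norm)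
      moreover have "\<bar>u \<bullet> (v - s *\<^sub>R u)\<bar> \<le> \<theta> * s" using Cauchy_Schwarz_ineq2[of u "v - s *\<^sub>R u"] u hv by simp
      ultimately show ?thesis by linarith
    qed
    have uv2: "u \<bullet> v \<ge> (1 - 2*\<theta>) * norm v"
    proof -
      have "(1 - 2*\<theta>) * norm v \<le> (1 - 2*\<theta>) * (s + \<theta> * s)" using vn th by (intro mult_left_mono) auto
      also have "\<dots> = s - \<theta> * s - 2 * (\<theta> * \<theta> * s)" by (simp add: algebra_simps)
      also have "\<dots> \<le> s - \<theta> * s" using th s by simp
      finally show ?thesis using uv by linarith
    qed
    have dv: "d \<bullet> v \<ge> t * (1 - 3*\<theta>) * norm v"
    proof -
      have "d \<bullet> v = t * (u \<bullet> v) + (d - t *\<^sub>R u) \<bullet> v" by (simp add: inner_diff_left)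
      moreover have "\<bar>(d - t *\<^sub>R u) \<bullet> v\<bar> \<le> \<theta> * t * norm v"
        using Cauchy_Schwarz_ineq2[of "d - t *\<^sub>R u" v] hd d_def mult_right_mono[OF hd norm_ge_zero, of v]
        by (simp add: mult.commute)
      moreover have "t * (u \<bullet> v) \<ge> t * ((1 - 2*\<theta>) * norm v)" using uv2 t by (intro mult_left_mono)
      ultimately show ?thesis by (simp add: algebra_simps)
    qed
    have "norm w * norm v \<ge> w \<bullet> v" by (metis Cauchy_Schwarz_ineq2 abs_le_D1)
    moreover have "w \<bullet> v = norm v * norm v + d \<bullet> v" using w by (simp add: inner_add_left dot_square_norm power2_eq_square)
    ultimately have "norm w * norm v \<ge> (norm v + (1 - 3*\<theta>) * t) * norm v" using dv by (simp add: algebra_simps)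
    then show ?thesis using vp by simp
  qed
  have "0 \<le> \<theta> * t" using th t by simp
  then show ?thesis using up low dn by (simp add: abs_le_iff algebra_simps)
qed

theorem lemma3p11:
  fixes \<gamma> :: "real \<Rightarrow> 'a::euclidean_space"
    and h :: "'a \<Rightarrow> real"
    and u :: 'a
    and \<theta> r \<tau> a b q r0 r1 :: real
  assumes curve: "lipschitz_curve 1 \<gamma>"
    and range: "\<gamma> ` {0..1} \<subseteq> box 0 One"
    and u: "norm u = 1"
    and theta: "0 < \<theta>" "\<theta> < 1/3"
    and R0: "0 \<le> r0" "r0 \<le> r1" "r1 \<le> 1"
    and flat: "flat_around \<theta> u r0 r1 \<gamma>"
    and ab: "a < b" "{a<..<b} \<subseteq> {r0..r1}"
    and q: "q \<in> {r0..r1} - {a<..<b}"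
    and tau: "\<tau> > 0"
    and hlip: "\<exists>L. L-lipschitz_on (cbox 0 One) h"
    and hval: "\<And>x. x \<in> {\<gamma> a, \<gamma> b} \<Longrightarrow> h x = r + \<tau> * norm (x - \<gamma> q)"
  shows "(q \<le> a \<longrightarrow> \<bar>(h (\<gamma> b) - h (\<gamma> a)) - \<tau> * (b - a)\<bar> \<le> 3 * \<theta> * \<tau> * (b - a)) \<and>
         (b \<le> q \<longrightarrow> \<bar>(h (\<gamma> b) - h (\<gamma> a)) - \<tau> * (a - b)\<bar> \<le> 3 * \<theta> * \<tau> * (b - a))"
proof -
  have a0: "r0 \<le> a"
  proof (rule ccontr)
    assume "\<not> r0 \<le> a"
    hence "(a + min b r0)/2 \<in> {a<..<b}" using ab by auto
    with ab(2) have "(a + min b r0)/2 \<in> {r0..r1}" by blast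
    hence "(a + min b r0)/2 \<ge> r0" by simp
    thus False using \<open>\<not> r0 \<le> a\<close> ab by (auto simp: min_def split: if_splits)
  qed
  have b1: "b \<le> r1"
  proof (rule ccontr)
    assume "\<not> b \<le> r1"
    hence "(b + max a r1)/2 \<in> {a<..<b}" using ab by auto
    with ab(2) have "(b + max a r1)/2 \<in> {r0..r1}" by blast
    hence "(b + max a r1)/2 \<le> r1" by simp
    thus False using \<open>\<not> b \<le> r1\<close> ab by (auto simp: max_def split: if_splits)
  qed
  have len: "0 < r1 - r0" using a0 b1 ab by linarith
  have F: "norm (\<gamma> t1 - \<gamma> t2 - (t1 - t2) *\<^sub>R u) \<le> \<theta> * \<bar>t1 - t2\<bar>"
    if "t1 \<in> {r0..r1}" "t2 \<in> {r0..r1}" for t1 t2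
  proof -
    have "infdist t1 {r0..r1} = 0" "infdist t2 {r0..r1} = 0" using that by (auto intro: infdist_zero)
    moreover have "t1 \<in> {0..1}" "t2 \<in> {0..1}" using that R0 by auto
    ultimately show ?thesis using flat len unfolding flat_around_def by auto
  qed
  have qR: "q \<in> {r0..r1}" using q by auto
  have aR: "a \<in> {r0..r1}" "b \<in> {r0..r1}" using a0 b1 ab by auto
  have hd: "h (\<gamma> b) - h (\<gamma> a) = \<tau> * (norm (\<gamma> b - \<gamma> q) - norm (\<gamma> a - \<gamma> q))"
    using hval[of "\<gamma> a"] hval[of "\<gamma> b"] by (simp add: algebra_simps)
  have th0: "0 \<le> \<theta>" using theta by simp
  show ?thesis
  proof (intro conjI impI)
    assume qa: "q \<le> a"
    have c: "\<bar>norm (\<gamma> b - \<gamma> q) - norm (\<gamma> a - \<gamma> q) - (b - a)\<bar> \<le> 3 * \<theta> * (b - a)"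
    proof (rule core[OF u th0 theta(2)])
      show "0 \<le> a - q" "0 \<le> b - a" using qa ab by auto
      show "norm (\<gamma> a - \<gamma> q - (a - q) *\<^sub>R u) \<le> \<theta> * (a - q)"
        using F[OF aR(1) qR] qa by simp
      show "norm (\<gamma> b - \<gamma> q - (\<gamma> a - \<gamma> q) - (b - a) *\<^sub>R u) \<le> \<theta> * (b - a)"
        using F[OF aR(2) aR(1)] ab by simp
    qed
    have "\<bar>(h (\<gamma> b) - h (\<gamma> a)) - \<tau> * (b - a)\<bar> = \<tau> * \<bar>norm (\<gamma> b - \<gamma> q) - norm (\<gamma> a - \<gamma> q) - (b - a)\<bar>"
      using tau by (simp add: hd abs_mult right_diff_distrib[symmetric])
    also have "\<dots> \<le> \<tau> * (3 * \<theta> * (b - a))" using c tau by (intro mult_left_mono) auto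
    finally show "\<bar>(h (\<gamma> b) - h (\<gamma> a)) - \<tau> * (b - a)\<bar> \<le> 3 * \<theta> * \<tau> * (b - a)" by (simp add: algebra_simps)
  next
    assume bq: "b \<le> q"
    have nu: "norm (- u) = 1" using u by simp
    have c: "\<bar>norm (\<gamma> a - \<gamma> q) - norm (\<gamma> b - \<gamma> q) - (b - a)\<bar> \<le> 3 * \<theta> * (b - a)"
    proof (rule core[OF nu th0 theta(2)])
      show "0 \<le> q - b" "0 \<le> b - a" using bq ab by auto
      show "norm (\<gamma> b - \<gamma> q - (q - b) *\<^sub>R - u) \<le> \<theta> * (q - b)"
        using F[OF aR(2) qR] bq by (simp add: algebra_simps)
      show "norm (\<gamma> a - \<gamma> q - (\<gamma> b - \<gamma> q) - (b - a) *\<^sub>R - u) \<le> \<theta> * (b - a)"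
        using F[OF aR(1) aR(2)] ab by (simp add: algebra_simps)
    qed
    have "\<bar>(h (\<gamma> b) - h (\<gamma> a)) - \<tau> * (a - b)\<bar> = \<tau> * \<bar>norm (\<gamma> a - \<gamma> q) - norm (\<gamma> b - \<gamma> q) - (b - a)\<bar>"
    proof -
      have "(h (\<gamma> b) - h (\<gamma> a)) - \<tau> * (a - b) = - (\<tau> * (norm (\<gamma> a - \<gamma> q) - norm (\<gamma> b - \<gamma> q) - (b - a)))"
        by (simp add: hd algebra_simps)
      then show ?thesis using tau by (simp add: abs_mult)
    qed
    also have "\<dots> \<le> \<tau> * (3 * \<theta> * (b - a))" using c tau by (intro mult_left_mono) auto
    finally show "\<bar>(h (\<gamma> b) - h (\<gamma> a)) - \<tau> * (a - b)\<bar> \<le> 3 * \<theta> * \<tau> * (b - a)" by (simp add: algebra_simps)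
  qed
qed

end
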